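(* Let $n\ge2$, let $\tau_1,\dots,\tau_{n!}$ be the enumeration $S_n$ of simple $n$-braids defined below, and let $M_n$ be the $n!\times n!$ matrix with $(M_n)_{k,\ell}=1$ if $(\tau_k,\tau_\ell)$ is normal and $0$ otherwise. Then: (i) the first column and the last row of $M_n$ contain only $1$'s; the first row, except its first entry, and the last column, except its last entry, contain only $0$'s; (ii) the first $(n-1)!$ columns of $M_n$ consist of $n$ stacked copies of $M_{n-1}$; (iii) if $D_R(\tau_k)=D_R(\tau_{k'})$, then the $k$-th and $k'$-th rows of $M_n$ coincide; if $D_L(\tau_\ell)=D_L(\tau_{\ell'})$, then the $\ell$-th and $\ell'$-th columns of $M_n$ coincide.
   Context: $B_n^+$ is the positive braid monoid with generators $\sigma_1,\dots,\sigma_{n-1}$ and relations $\sigma_i\sigma_j=\sigma_j\sigma_i$ ($|i-j|\ge2$), $\sigma_i\sigma_j\sigma_i=\sigma_j\sigma_i\sigma_j$ ($|i-j|=1$). $\Delta_1=1$, $\Delta_m=\sigma_1\cdots\sigma_{m-1}\Delta_{m-1}$. Simple $m$-braids are the left (equivalently right) divisors of $\Delta_m$ in $B_m^+$. For simple $x$, $D_L(x)$ (resp. $D_R(x)$) is the set of $i$ with $\sigma_i$ a left (resp. right) divisor of $x$. A pair $(x,y)$ of simple $m$-braids is normal if $x=\gcd(\Delta_m,xy)$ (greatest common left divisor); equivalently $D_R(x)\supseteq D_L(y)$. With $\sigma_{i,m}=\sigma_i\sigma_{i+1}\cdots\sigma_{m-1}$ ($\sigma_{m,m}=1$), the list $S_m$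 of simple $m$-braids is defined by $S_1=(1)$ and $S_m=S_{m-1}{}^\frown\sigma_{m-1,m}S_{m-1}{}^\frown\cdots{}^\frown\sigma_{1,m}S_{m-1}$, where ${}^\frown$ is list concatenation and $xS$ is the list obtained by left-multiplying every entry of $S$ by $x$. Each $S_{m-1}$ is an initial segment of $S_m$; $\tau_k$ denotes the $k$-th entry, and $M_{n-1}$ is defined like $M_n$ from $S_{n-1}$ with normality in $B_{n-1}^+$. *)

theory Defs
  imports Main
begin

(* Positive braid words: the generator sigma_i is represented by the natural number i.
   A word over {1..<m} represents an element of B_m^+. *)

inductive braid_step :: "nat list \<Rightarrow> nat list \<Rightarrow> bool" where
  comm: "i + 2 \<le> j \<or> j + 2 \<le> i \<Longrightarrow> braid_step (u @ [i, j] @ v) (u @ [j, i] @ v)"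
| braid: "j = Suc i \<or> i = Suc j \<Longrightarrow> braid_step (u @ [i, j, i] @ v) (u @ [j, i, j] @ v)"

(* equality in the positive braid monoid (the step relation is symmetric) *)
definition braid_eq :: "nat list \<Rightarrow> nat list \<Rightarrow> bool" where
  "braid_eq = braid_step\<^sup>*\<^sup>*"

definition words :: "nat \<Rightarrow> nat list set" where
  "words m = {w. set w \<subseteq> {1..<m}}"

definition ldiv :: "nat \<Rightarrow> nat list \<Rightarrow> nat list \<Rightarrow> bool" where
  "ldiv m x y \<longleftrightarrow> (\<exists>z \<in> words m. braid_eq (x @ z) y)"

definition rdiv :: "nat \<Rightarrow> nat list \<Rightarrow> nat list \<Rightarrow> bool" where
  "rdiv m x y \<longleftrightarrow> (\<exists>z \<in> words m. braid_eq (z @ x) y)"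

fun Delta :: "nat \<Rightarrow> nat list" where
  "Delta 0 = []"
| "Delta (Suc m) = [1..<Suc m] @ Delta m"

definition simple :: "nat \<Rightarrow> nat list \<Rightarrow> bool" where
  "simple m x \<longleftrightarrow> x \<in> words m \<and> ldiv m x (Delta m)"

definition D_L :: "nat \<Rightarrow> nat list \<Rightarrow> nat set" where
  "D_L m x = {i \<in> {1..<m}. ldiv m [i] x}"

definition D_R :: "nat \<Rightarrow> nat list \<Rightarrow> nat set" where
  "D_R m x = {i \<in> {1..<m}. rdiv m [i] x}"

(* (x,y) normal in B_m^+ : x = gcd(Delta_m, x y), i.e. x is a greatest common left divisor *)
definition normal :: "nat \<Rightarrow> nat list \<Rightarrow> nat list \<Rightarrow> bool" where
  "normal m x y \<longleftrightarrow>
     ldiv m x (Delta m) \<and> ldiv m x (x @ y) \<and>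
     (\<forall>w \<in> words m. ldiv m w (Delta m) \<longrightarrow> ldiv m w (x @ y) \<longrightarrow> ldiv m w x)"

definition sigma_seg :: "nat \<Rightarrow> nat \<Rightarrow> nat list" where
  "sigma_seg i m = [i..<m]"

(* S_1 = (1), S_m = S_(m-1) ^ sigma_(m-1,m) S_(m-1) ^ ... ^ sigma_(1,m) S_(m-1).
   The first block corresponds to i = m (sigma_(m,m) = 1). simples 0 is a junk value. *)
fun simples :: "nat \<Rightarrow> nat list list" where
  "simples 0 = [[]]"
| "simples (Suc m) =
     concat (map (\<lambda>i. map (\<lambda>x. sigma_seg i (Suc m) @ x) (simples m)) (rev [1..<Suc (Suc m)]))"

definition tau :: "nat \<Rightarrow> nat \<Rightarrow> nat list" where
  "tau n k = simples n ! (k - 1)"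

definition M :: "nat \<Rightarrow> nat \<Rightarrow> nat \<Rightarrow> nat" where
  "M n k l = (if normal n (tau n k) (tau n l) then 1 else 0)"

end

theory Submission
  imports Defs
begin


abbreviation beq (infix "~~" 50) where "x ~~ y \<equiv> braid_eq x y"

lemma step_sym: "braid_step u v \<Longrightarrow> braid_step v u"
proof (induction rule: braid_step.induct)
  case (comm i j u v) then show ?case using braid_step.comm[of j i u v] by auto
next
  case (braid j i u v) then show ?case using braid_step.braid[of i j u v] by auto
qed

lemma step_cong: "braid_step u v \<Longrightarrow> braid_step (w@u@w') (w@v@w')"
proof (induction rule: braid_step.induct)
  case (comm i j u v) then show ?case using braid_step.comm[of i j "w@u" "v@w'"] by auto
next
  case (braid j i u v) then show ?case using braid_step.braid[of j i "w@u" "v@w'"] by auto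
qed

lemma step_length: "braid_step u v \<Longrightarrow> length u = length v"
  by (induction rule: braid_step.induct) auto

lemma step_set: "braid_step u v \<Longrightarrow> set u = set v"
  by (induction rule: braid_step.induct) auto

lemma beq_refl[simp]: "x ~~ x" unfolding braid_eq_def by simp

lemma beq_trans[trans]: "x ~~ y \<Longrightarrow> y ~~ z \<Longrightarrow> x ~~ z"
  unfolding braid_eq_def by simp

lemma beq_sym: "x ~~ y \<Longrightarrow> y ~~ x"
  unfolding braid_eq_def
  by (induction rule: rtranclp_induct) (auto intro: converse_rtranclp_into_rtranclp step_sym)

lemma beq_cong: "x ~~ y \<Longrightarrow> (w@x@w') ~~ (w@y@w')"
  unfolding braid_eq_def
  by (induction rule: rtranclp_induct) (auto intro: rtranclp.rtrancl_into_rtrancl step_cong)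

lemma beq_app_left: "x ~~ y \<Longrightarrow> (w@x) ~~ (w@y)"
  using beq_cong[of x y w "[]"] by simp

lemma beq_app_right: "x ~~ y \<Longrightarrow> (x@w) ~~ (y@w)"
  using beq_cong[of x y "[]" w] by simp

lemma beq_Cons: "x ~~ y \<Longrightarrow> (a#x) ~~ (a#y)"
  using beq_app_left[of x y "[a]"] by simp

lemma beq_app: "x ~~ y \<Longrightarrow> x' ~~ y' \<Longrightarrow> (x@x') ~~ (y@y')"
  by (meson beq_app_left beq_app_right beq_trans)

lemma beq_length: "x ~~ y \<Longrightarrow> length x = length y"
  unfolding braid_eq_def by (induction rule: rtranclp_induct) (auto dest: step_length)

lemma beq_set: "x ~~ y \<Longrightarrow> set x = set y"
  unfolding braid_eq_def by (induction rule: rtranclp_induct) (auto dest: step_set)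

definition far :: "nat \<Rightarrow> nat \<Rightarrow> bool" where "far i j \<longleftrightarrow> i + 2 \<le> j \<or> j + 2 \<le> i"
definition adj :: "nat \<Rightarrow> nat \<Rightarrow> bool" where "adj i j \<longleftrightarrow> j = Suc i \<or> i = Suc j"

lemma far_sym: "far i j = far j i" unfolding far_def by auto
lemma adj_sym: "adj i j = adj j i" unfolding adj_def by auto
lemma far_adj: "i \<noteq> j \<Longrightarrow> \<not> far i j \<Longrightarrow> adj i j" unfolding far_def adj_def by auto
lemma not_far_adj: "adj i j \<Longrightarrow> \<not> far i j" unfolding far_def adj_def by auto
lemma adj_neq: "adj i j \<Longrightarrow> i \<noteq> j" unfolding adj_def by auto
lemma far_neq: "far i j \<Longrightarrow> i \<noteq> j" unfolding far_def by auto

lemma comm_eq: "far i j \<Longrightarrow> (u@[i,j]@v) ~~ (u@[j,i]@v)"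
  unfolding braid_eq_def far_def by (rule r_into_rtranclp, rule braid_step.comm) auto

lemma braid_eq3: "adj i j \<Longrightarrow> (u@[i,j,i]@v) ~~ (u@[j,i,j]@v)"
  unfolding braid_eq_def adj_def by (rule r_into_rtranclp, rule braid_step.braid) auto

lemma comm2: "far i j \<Longrightarrow> (i#j#v) ~~ (j#i#v)"
  using comm_eq[of i j "[]" v] by simp
lemma braid3: "adj i j \<Longrightarrow> (i#j#i#v) ~~ (j#i#j#v)"
  using braid_eq3[of i j "[]" v] by simp

definition cpl :: "nat \<Rightarrow> nat \<Rightarrow> nat list" where
  "cpl a b = (if adj a b then [b,a] else [b])"

lemma comp_lcm: "a \<noteq> b \<Longrightarrow> (a # cpl a b) ~~ (b # cpl b a)"
  unfolding cpl_def using comm2[of a b "[]"] braid3[of a b "[]"] far_adj[of a b]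
  by (auto simp: adj_sym)

definition R :: "nat \<Rightarrow> nat list \<Rightarrow> nat \<Rightarrow> nat list \<Rightarrow> bool" where
  "R a X b Y \<longleftrightarrow> (a = b \<longrightarrow> X ~~ Y) \<and> (a \<noteq> b \<longrightarrow> (\<exists>Z. X ~~ cpl a b @ Z \<and> Y ~~ cpl b a @ Z))"

lemma R_sym: "R a X b Y \<Longrightarrow> R b Y a X"
  unfolding R_def by (auto intro: beq_sym)

lemma R_single: assumes "braid_step (c#U) (b#Y)" shows "R c U b Y"
  using assms
proof (cases rule: braid_step.cases)
  case (comm i j u v)
  show ?thesis
  proof (cases u)
    case Nil
    with comm have "c = i" "U = j#v" "b = j" "Y = i#v" "far i j" by (auto simp: far_def)
    then show ?thesis unfolding R_def cpl_def by (auto simp: adj_sym intro!: exI[of _ v] dest: not_far_adj far_neq)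
  next
    case (Cons x u')
    with comm have "c = b" "braid_step U Y" using braid_step.comm[of i j u' v] by auto
    then show ?thesis unfolding R_def braid_eq_def by auto
  qed
next
  case (braid j i u v)
  show ?thesis
  proof (cases u)
    case Nil
    with braid have "c = i" "U = j#i#v" "b = j" "Y = i#j#v" "adj i j" by (auto simp: adj_def)
    then show ?thesis unfolding R_def cpl_def by (auto simp: adj_sym intro!: exI[of _ v] dest: adj_neq)
  next
    case (Cons x u')
    with braid have "c = b" "braid_step U Y" using braid_step.braid[of j i u' v] by auto
    then show ?thesis unfolding R_def braid_eq_def by auto
  qed
qed


definition PP :: "nat \<Rightarrow> bool" where
  "PP N \<longleftrightarrow> (\<forall>a X b Y. length X < N \<longrightarrow> (a#X) ~~ (b#Y) \<longrightarrow> R a X b Y)"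

lemma PP_R: "PP N \<Longrightarrow> length X < N \<Longrightarrow> (a#X) ~~ (b#Y) \<Longrightarrow> R a X b Y"
  unfolding PP_def by blast

lemma PP_cancel1: "PP N \<Longrightarrow> length X < N \<Longrightarrow> (a#X) ~~ (a#Y) \<Longrightarrow> X ~~ Y"
  using PP_R unfolding R_def by blast

lemma PP_cancel: "PP N \<Longrightarrow> length (w@X) \<le> N \<Longrightarrow> (w@X) ~~ (w@Y) \<Longrightarrow> X ~~ Y"
proof (induction w)
  case Nil then show ?case by simp
next
  case (Cons c w)
  then have "(w@X) ~~ (w@Y)" using PP_cancel1[of N "w@X" c "w@Y"] by simp
  then show ?case using Cons by simp
qed

lemma PP_far: "PP N \<Longrightarrow> length X < N \<Longrightarrow> far a b \<Longrightarrow> (a#X) ~~ (b#Y) \<Longrightarrow> \<exists>Z. X ~~ b#Z \<and> Y ~~ a#Z"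
proof -
  assume a: "PP N" "length X < N" "far a b" "(a#X) ~~ (b#Y)"
  have "\<not> adj a b" "\<not> adj b a" using a(3) not_far_adj far_sym by blast+
  then show ?thesis using PP_R[OF a(1,2,4)] far_neq[OF a(3)] unfolding R_def cpl_def by auto
qed

lemma PP_adj: "PP N \<Longrightarrow> length X < N \<Longrightarrow> adj a b \<Longrightarrow> (a#X) ~~ (b#Y) \<Longrightarrow> \<exists>Z. X ~~ b#a#Z \<and> Y ~~ a#b#Z"
  using PP_R[of N X a b Y] adj_neq[of a b] unfolding R_def cpl_def
  by (auto simp: adj_sym)

lemma comm_list: "(\<forall>x\<in>set w. far c x) \<Longrightarrow> (c#w@Z) ~~ (w@c#Z)"
proof (induction w)
  case Nil then show ?case by simp
next
  case (Cons x w)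
  have "(c#x#w@Z) ~~ (x#c#w@Z)" using comm2[of c x "w@Z"] Cons.prems by simp
  also have "(x#c#w@Z) ~~ (x#w@c#Z)" using Cons by (auto intro: beq_Cons)
  finally show ?case by simp
qed

lemma cpl_far: "far a b \<Longrightarrow> cpl a b = [b]"
  by (auto simp: cpl_def dest: not_far_adj)
lemma cpl_adj: "adj a b \<Longrightarrow> cpl a b = [b,a]"
  unfolding cpl_def by simp

lemma case4a:
  assumes P: "PP N" and lU: "length U = N"
    and fac: "far a c" and fbc: "far b c" and ab: "a \<noteq> b"
    and X: "X ~~ cpl a c @ Z1" and U1: "U ~~ cpl c a @ Z1" and U2: "U ~~ cpl c b @ Z2"
    and Y: "Y ~~ cpl b c @ Z2"
  shows "\<exists>Z. X ~~ cpl a b @ Z \<and> Y ~~ cpl b a @ Z"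
proof -
  have ca: "cpl c a = [a]" "cpl a c = [c]" "cpl c b = [b]" "cpl b c = [c]"
    using fac fbc by (auto simp: cpl_far far_sym)
  have e: "(a#Z1) ~~ (b#Z2)" using beq_trans[OF beq_sym[OF U1] U2] ca by simp
  have "length Z1 < N" using beq_length[OF U1] lU ca by simp
  then have "R a Z1 b Z2" using PP_R[OF P _ e] by simp
  then obtain Z3 where Z3: "Z1 ~~ cpl a b @ Z3" "Z2 ~~ cpl b a @ Z3" unfolding R_def using ab by auto
  have s1: "\<forall>x\<in>set (cpl a b). far c x" "\<forall>x\<in>set (cpl b a). far c x"
    using fac fbc unfolding cpl_def by (auto simp: far_sym)
  have "X ~~ c # Z1" using X ca by simp
  also have "... ~~ c # cpl a b @ Z3" using Z3 by (simp add: beq_Cons)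
  also have "... ~~ cpl a b @ c # Z3" using comm_list[OF s1(1)] .
  finally have 1: "X ~~ cpl a b @ c # Z3" .
  have "Y ~~ c # Z2" using Y ca by simp
  also have "... ~~ c # cpl b a @ Z3" using Z3 by (simp add: beq_Cons)
  also have "... ~~ cpl b a @ c # Z3" using comm_list[OF s1(2)] .
  finally show ?thesis using 1 by blast
qed

lemma case4b:
  assumes P: "PP N" and lU: "length U = N"
    and fac: "adj a c" and fbc: "far b c" and ab: "a \<noteq> b"
    and X: "X ~~ cpl a c @ Z1" and U1: "U ~~ cpl c a @ Z1" and U2: "U ~~ cpl c b @ Z2"
    and Y: "Y ~~ cpl b c @ Z2"
  shows "\<exists>Z. X ~~ cpl a b @ Z \<and> Y ~~ cpl b a @ Z"
proof -
  have ca: "cpl c a = [a,c]" "cpl a c = [c,a]" "cpl c b = [b]" "cpl b c = [c]"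
    using fac fbc by (auto simp: cpl_far cpl_adj far_sym adj_sym)
  have e: "(a#c#Z1) ~~ (b#Z2)" using beq_trans[OF beq_sym[OF U1] U2] ca by simp
  have lZ1: "length Z1 + 2 = N" using beq_length[OF U1] lU ca by simp
  show ?thesis
  proof (cases "far a b")
    case True
    then obtain Z3 where Z3: "c#Z1 ~~ b#Z3" "Z2 ~~ a#Z3" using PP_far[OF P _ True e] lZ1 by auto
    obtain Z4 where Z4: "Z1 ~~ b#Z4" "Z3 ~~ c#Z4" using PP_far[OF P _ _ Z3(1)] lZ1 fbc
      by (auto simp: far_sym)
    have cab: "cpl a b = [b]" "cpl b a = [a]" using True by (auto simp: cpl_far far_sym)
    have "X ~~ c#a#Z1" using X ca by simp
    also have "... ~~ c#a#b#Z4" using Z4 by (simp add: beq_Cons)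
    also have "... ~~ b#c#a#Z4"
    proof -
      have "b#c#a#Z4 ~~ c#a#b#Z4" using comm_list[of "[c,a]" b "Z4"] True fbc by (simp add: far_sym)
      then show ?thesis by (rule beq_sym)
    qed
    finally have 1: "X ~~ cpl a b @ c#a#Z4" using cab by simp
    have "Y ~~ c#Z2" using Y ca by simp
    also have "... ~~ c#a#Z3" using Z3 by (simp add: beq_Cons)
    also have "... ~~ c#a#c#Z4" using Z4 by (simp add: beq_Cons)
    also have "... ~~ a#c#a#Z4" using braid3[of c a Z4] fac by (simp add: adj_sym)
    finally show ?thesis using 1 cab by auto
  next
    case False
    then have aab: "adj a b" using ab far_adj by blast
    have cab: "cpl a b = [b,a]" "cpl b a = [a,b]" using aab by (auto simp: cpl_adj adj_sym)
    obtain Z3 where Z3: "c#Z1 ~~ b#a#Z3" "Z2 ~~ a#b#Z3" using PP_adj[OF P _ aab e] lZ1 by auto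
    obtain Z4 where Z4: "Z1 ~~ b#Z4" "a#Z3 ~~ c#Z4" using PP_far[OF P _ _ Z3(1)] lZ1 fbc
      by (auto simp: far_sym)
    have "length Z3 + 1 = length Z1" using beq_length[OF Z3(1)] by simp
    then obtain Z5 where Z5: "Z3 ~~ c#a#Z5" "Z4 ~~ a#c#Z5" using PP_adj[OF P _ fac Z4(2)] lZ1 by auto
    have "X ~~ c#a#Z1" using X ca by simp
    also have "... ~~ c#a#b#Z4" using Z4 by (simp add: beq_Cons)
    also have "... ~~ c#a#b#a#c#Z5" using Z5 by (simp add: beq_Cons)
    also have "... ~~ c#b#a#b#c#Z5" using braid_eq3[of a b "[c]" "c#Z5"] aab by simp
    also have "... ~~ b#c#a#b#c#Z5" using comm2[of c b "a#b#c#Z5"] fbc by (simp add: far_sym)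
    also have "... ~~ b#c#a#c#b#Z5" using comm_eq[of b c "[b,c,a]" Z5] fbc by simp
    also have "... ~~ b#a#c#a#b#Z5" using braid_eq3[of c a "[b]" "b#Z5"] fac by (simp add: adj_sym)
    finally have 1: "X ~~ cpl a b @ c#a#b#Z5" using cab by simp
    have "Y ~~ c#Z2" using Y ca by simp
    also have "... ~~ c#a#b#Z3" using Z3 by (simp add: beq_Cons)
    also have "... ~~ c#a#b#c#a#Z5" using Z5 by (simp add: beq_Cons)
    also have "... ~~ c#a#c#b#a#Z5" using comm_eq[of b c "[c,a]" "a#Z5"] fbc by simp
    also have "... ~~ a#c#a#b#a#Z5" using braid3[of c a "b#a#Z5"] fac by (simp add: adj_sym)
    also have "... ~~ a#c#b#a#b#Z5" using braid_eq3[of a b "[a,c]" "Z5"] aab by simp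
    also have "... ~~ a#b#c#a#b#Z5" using comm_eq[of c b "[a]" "a#b#Z5"] fbc by (simp add: far_sym)
    finally show ?thesis using 1 cab by auto
  qed
qed

lemma case4d:
  assumes P: "PP N" and lU: "length U = N"
    and fac: "adj a c" and fbc: "adj b c" and ab: "a \<noteq> b"
    and X: "X ~~ cpl a c @ Z1" and U1: "U ~~ cpl c a @ Z1" and U2: "U ~~ cpl c b @ Z2"
    and Y: "Y ~~ cpl b c @ Z2"
  shows "\<exists>Z. X ~~ cpl a b @ Z \<and> Y ~~ cpl b a @ Z"
proof -
  have fab: "far a b" using fac fbc ab unfolding far_def adj_def by auto
  have ca: "cpl c a = [a,c]" "cpl a c = [c,a]" "cpl c b = [b,c]" "cpl b c = [c,b]"
    "cpl a b = [b]" "cpl b a = [a]"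
    using fac fbc fab by (auto simp: cpl_far cpl_adj far_sym adj_sym)
  have e: "(a#c#Z1) ~~ (b#c#Z2)" using beq_trans[OF beq_sym[OF U1] U2] ca by simp
  have lZ1: "length Z1 + 2 = N" using beq_length[OF U1] lU ca by simp
  obtain Z3 where Z3: "c#Z1 ~~ b#Z3" "c#Z2 ~~ a#Z3" using PP_far[OF P _ fab e] lZ1 by auto
  obtain Z4 where Z4: "Z1 ~~ b#c#Z4" "Z3 ~~ c#b#Z4" using PP_adj[OF P _ _ Z3(1)] lZ1 fbc
    by (auto simp: adj_sym)
  have l2: "length Z2 = length Z1" using beq_length[OF e] by simp
  have e2: "c#Z2 ~~ a#c#b#Z4" using Z3(2) Z4(2) beq_Cons beq_trans by blast
  obtain Z5 where Z5: "Z2 ~~ a#c#Z5" "c#b#Z4 ~~ c#a#Z5" using PP_adj[OF P _ _ e2] lZ1 l2 fac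
    by (auto simp: adj_sym)
  have lZ4: "length Z4 + 2 = length Z1" using beq_length[OF Z4(1)] by simp
  have e3: "b#Z4 ~~ a#Z5" using PP_cancel1[OF P _ Z5(2)] lZ4 lZ1 by simp
  have fba: "far b a" using fab by (simp add: far_sym)
  obtain Z6 where Z6: "Z4 ~~ a#Z6" "Z5 ~~ b#Z6" using PP_far[OF P _ fba e3] lZ4 lZ1 by auto
  have "X ~~ c#a#Z1" using X ca by simp
  also have "... ~~ c#a#b#c#Z4" using Z4 by (simp add: beq_Cons)
  also have "... ~~ c#a#b#c#a#Z6" using Z6 by (simp add: beq_Cons)
  also have "... ~~ c#b#a#c#a#Z6" using comm_eq[of a b "[c]" "c#a#Z6"] fab by simp
  also have "... ~~ c#b#c#a#c#Z6" using braid_eq3[of a c "[c,b]" "Z6"] fac by simp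
  also have "... ~~ b#c#b#a#c#Z6" using braid3[of c b "a#c#Z6"] fbc by (simp add: adj_sym)
  finally have 1: "X ~~ cpl a b @ c#b#a#c#Z6" using ca by simp
  have "Y ~~ c#b#Z2" using Y ca by simp
  also have "... ~~ c#b#a#c#Z5" using Z5 by (simp add: beq_Cons)
  also have "... ~~ c#b#a#c#b#Z6" using Z6 by (simp add: beq_Cons)
  also have "... ~~ c#a#b#c#b#Z6" using comm_eq[of b a "[c]" "c#b#Z6"] fab by (simp add: far_sym)
  also have "... ~~ c#a#c#b#c#Z6" using braid_eq3[of b c "[c,a]" "Z6"] fbc by simp
  also have "... ~~ a#c#a#b#c#Z6" using braid3[of c a "b#c#Z6"] fac by (simp add: adj_sym)
  also have "... ~~ a#c#b#a#c#Z6" using comm_eq[of a b "[a,c]" "c#Z6"] fab by simp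
  finally show ?thesis using 1 ca by auto
qed

lemma case4:
  assumes P: "PP N" and lU: "length U = N"
    and d: "a \<noteq> b" "a \<noteq> c" "b \<noteq> c"
    and X: "X ~~ cpl a c @ Z1" and U1: "U ~~ cpl c a @ Z1" and U2: "U ~~ cpl c b @ Z2"
    and Y: "Y ~~ cpl b c @ Z2"
  shows "\<exists>Z. X ~~ cpl a b @ Z \<and> Y ~~ cpl b a @ Z"
proof (cases "far a c")
  case T1: True
  show ?thesis
  proof (cases "far b c")
    case True then show ?thesis using case4a[OF P lU T1 True d(1) X U1 U2 Y] by blast
  next
    case False
    then have "adj b c" using d far_adj by blast
    then obtain Z where "Y ~~ cpl b a @ Z \<and> X ~~ cpl a b @ Z"
      using case4b[OF P lU _ T1 _ Y U2 U1 X] d by blast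
    then show ?thesis by blast
  qed
next
  case F1: False
  then have ac: "adj a c" using d far_adj by blast
  show ?thesis
  proof (cases "far b c")
    case True then show ?thesis using case4b[OF P lU ac True d(1) X U1 U2 Y] by blast
  next
    case False
    then have "adj b c" using d far_adj by blast
    then show ?thesis using case4d[OF P lU ac _ d(1) X U1 U2 Y] by blast
  qed
qed

lemma compose:
  assumes P: "PP (length X)" and lU: "length U = length X"
    and R1: "R a X c U" and R2: "R c U b Y"
  shows "R a X b Y"
proof (cases "a = c")
  case True
  then have "X ~~ U" using R1 unfolding R_def by simp
  then show ?thesis using R2 True unfolding R_def by (auto intro: beq_trans)
next
  case ac: False
  show ?thesis
  proof (cases "c = b")
    case True
    then have UY: "U ~~ Y" using R2 unfolding R_def by simp
    obtain Z where "X ~~ cpl a c @ Z" "U ~~ cpl c a @ Z" using R1 ac unfolding R_def by auto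
    then have "X ~~ cpl a c @ Z" "Y ~~ cpl c a @ Z" using beq_trans[OF beq_sym[OF UY]] by auto
    then show ?thesis using True ac unfolding R_def by auto
  next
    case cb: False
    obtain Z1 where Z1: "X ~~ cpl a c @ Z1" "U ~~ cpl c a @ Z1" using R1 ac unfolding R_def by auto
    obtain Z2 where Z2: "U ~~ cpl c b @ Z2" "Y ~~ cpl b c @ Z2" using R2 cb unfolding R_def by auto
    show ?thesis
    proof (cases "a = b")
      case True
      have eq: "(cpl c a @ Z1) ~~ (cpl c a @ Z2)" using beq_trans[OF beq_sym[OF Z1(2)] Z2(1)] True by simp
      have "Z1 ~~ Z2" by (rule PP_cancel[OF P _ eq]) (use beq_length[OF Z1(2)] lU in simp)
      then have "X ~~ Y" using beq_trans[OF Z1(1) beq_app_left[OF \<open>Z1 ~~ Z2\<close>]] beq_sym[OF Z2(2)] True by (auto intro: beq_trans)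
      then show ?thesis using True unfolding R_def by simp
    next
      case False
      then show ?thesis using case4[OF P lU False ac _ Z1 Z2] cb unfolding R_def by auto
    qed
  qed
qed

theorem garside: "(a#X) ~~ (b#Y) \<Longrightarrow> R a X b Y"
proof (induction "length X" arbitrary: a X b Y rule: less_induct)
  case less
  have P: "PP (length X)" unfolding PP_def using less.hyps by blast
  have "\<And>W. (a#X) ~~ W \<Longrightarrow> (\<forall>c U. W = c#U \<longrightarrow> R a X c U)"
  proof -
    fix W assume "(a#X) ~~ W"
    then show "\<forall>c U. W = c#U \<longrightarrow> R a X c U" unfolding braid_eq_def
    proof (induction rule: rtranclp_induct)
      case base then show ?case unfolding R_def by simp
    next
      case (step W W')
      show ?case
      proof (intro allI impI)
        fix b Y assume W': "W' = b#Y"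
        have "length W = Suc (length X)" using step(1) beq_length unfolding braid_eq_def by fastforce
        then obtain c U where W: "W = c#U" by (cases W) auto
        have lU: "length U = length X" using \<open>length W = Suc (length X)\<close> W by simp
        have "R a X c U" using step(3) W by simp
        moreover have "R c U b Y" using R_single step(2) W W' by simp
        ultimately show "R a X b Y" using compose[OF P lU] by blast
      qed
    qed
  qed
  then show ?case using less.prems by blast
qed

corollary cancel1: "(a#X) ~~ (a#Y) \<Longrightarrow> X ~~ Y"
  using garside unfolding R_def by blast

corollary cancel: "(w@X) ~~ (w@Y) \<Longrightarrow> X ~~ Y"
  by (induction w) (auto intro: cancel1)


definition pre :: "nat list \<Rightarrow> nat list \<Rightarrow> bool" where
  "pre p u \<longleftrightarrow> (\<exists>z. (p@z) ~~ u)"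

lemma pre_appI[simp]: "pre p (p@z)" unfolding pre_def using beq_refl by blast
lemma pre_refl[simp]: "pre p p" using pre_appI[of p "[]"] by simp
lemma pre_Nil[simp]: "pre [] u" unfolding pre_def by (intro exI[of _ u]) simp
lemma pre_of_beq: "p ~~ u \<Longrightarrow> pre p u" unfolding pre_def by (intro exI[of _ "[]"]) simp
lemma pre_trans: "pre p q \<Longrightarrow> pre q r \<Longrightarrow> pre p r"
  unfolding pre_def by (metis append.assoc beq_app_right beq_trans)
lemma pre_beq_right: "pre p u \<Longrightarrow> u ~~ u' \<Longrightarrow> pre p u'"
  unfolding pre_def using beq_trans by blast
lemma pre_beq_left: "p ~~ p' \<Longrightarrow> pre p u \<Longrightarrow> pre p' u"
  unfolding pre_def by (meson beq_app_right beq_sym beq_trans)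
lemma pre_app_mono: "pre p m \<Longrightarrow> pre (w@p) (w@m)"
  unfolding pre_def using beq_app_left by fastforce
lemma pre_app_cancel: "pre (w@p) (w@m) \<Longrightarrow> pre p m"
  unfolding pre_def using cancel[of w] by fastforce
lemma pre_Cons_cancel: "pre (a#p) (a#m) \<Longrightarrow> pre p m"
  using pre_app_cancel[of "[a]"] by simp
lemma pre_Cons_mono: "pre p m \<Longrightarrow> pre (a#p) (a#m)"
  using pre_app_mono[of p m "[a]"] by simp
lemma pre_prefix: "pre (p@q) m \<Longrightarrow> pre p m"
  unfolding pre_def by (metis append.assoc)
lemma pre_length: "pre p m \<Longrightarrow> length p \<le> length m"
  unfolding pre_def by (auto dest: beq_length)

lemma atom:
  assumes "a \<noteq> b" "pre [a] m" "pre [b] m"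
  shows "\<exists>r. m ~~ (a # cpl a b @ r)"
proof -
  obtain X Y where "(a#X) ~~ m" "(b#Y) ~~ m" using assms unfolding pre_def by auto
  then have "(a#X) ~~ (b#Y)" using beq_sym beq_trans by blast
  then have "R a X b Y" by (rule garside)
  then obtain Z where "X ~~ cpl a b @ Z" using assms(1) unfolding R_def by auto
  then have "(a#X) ~~ (a#cpl a b @ Z)" by (simp add: beq_Cons)
  then show ?thesis using \<open>(a#X) ~~ m\<close> beq_sym beq_trans by blast
qed

definition islcm :: "nat list \<Rightarrow> nat list \<Rightarrow> nat list \<Rightarrow> bool" where
  "islcm p q L \<longleftrightarrow> pre p L \<and> pre q L \<and> (\<forall>m. pre p m \<longrightarrow> pre q m \<longrightarrow> pre L m)"

theorem lcm_exists: "pre p u \<Longrightarrow> pre q u \<Longrightarrow> \<exists>L. islcm p q L"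
proof (induction "length u" arbitrary: u p q rule: less_induct)
  case less
  show ?case
  proof (cases p)
    case Nil then show ?thesis unfolding islcm_def by (intro exI[of _ q]) auto
  next
    case (Cons a p1)
    show ?thesis
    proof (cases q)
      case Nil then show ?thesis unfolding islcm_def by (intro exI[of _ p]) auto
    next
      case (Cons b q1)
      obtain s where s: "(a#p1@s) ~~ u" using less.prems(1) \<open>p = a#p1\<close> unfolding pre_def by auto
      obtain s' where s': "(b#q1@s') ~~ u" using less.prems(2) \<open>q = b#q1\<close> unfolding pre_def by auto
      show ?thesis
      proof (cases "a = b")
        case True
        have "pre q1 (p1@s)"
        proof -
          have "(a#q1@s') ~~ (a#p1@s)" using s s' True beq_sym beq_trans by blast
          then show ?thesis unfolding pre_def using cancel1 by fastforce
        qed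
        moreover have "length (p1@s) < length u" using beq_length[OF s] by simp
        ultimately obtain L1 where L1: "islcm p1 q1 L1" using less.hyps[of "p1@s" p1 q1] by auto
        have "islcm p q (a#L1)" unfolding islcm_def
        proof (intro conjI allI impI)
          show "pre p (a#L1)" using L1 \<open>p = a#p1\<close> by (simp add: islcm_def pre_Cons_mono)
          show "pre q (a#L1)" using L1 \<open>q = b#q1\<close> True by (simp add: islcm_def pre_Cons_mono)
        next
          fix m assume m: "pre p m" "pre q m"
          then obtain z where z: "(a#p1@z) ~~ m" using \<open>p = a#p1\<close> unfolding pre_def by auto
          have "pre p1 (p1@z)" by simp
          moreover have "pre q1 (p1@z)"
          proof -
            have "pre (a#q1) (a#p1@z)" using m(2) \<open>q = b#q1\<close> True beq_sym[OF z] pre_beq_right by blast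
            then show ?thesis by (rule pre_Cons_cancel)
          qed
          ultimately have "pre L1 (p1@z)" using L1 unfolding islcm_def by blast
          then have "pre (a#L1) (a#p1@z)" by (rule pre_Cons_mono)
          then show "pre (a#L1) m" using z pre_beq_right by blast
        qed
        then show ?thesis by blast
      next
        case False
        define C where "C = cpl a b"
        define C' where "C' = cpl b a"
        have CC: "(a#C) ~~ (b#C')" unfolding C_def C'_def using comp_lcm[OF False] .
        have pa: "pre [a] u" "pre [b] u" using less.prems \<open>p = a#p1\<close> \<open>q = b#q1\<close>
          by (auto intro: pre_trans[of _ "a#p1"] pre_trans[of _ "b#q1"] pre_prefix[of "[a]" p1]
                pre_prefix[of "[b]" q1])
        obtain r where r: "u ~~ (a#C@r)" using atom[OF False pa] C_def by auto
        have r2: "u ~~ (b#C'@r)" using r beq_app_right[OF CC, of r] beq_trans by auto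
        have lr: "length (C@r) < length u" "length (C'@r) < length u" "length r < length u"
          using beq_length[OF r] beq_length[OF r2] by auto
        have "pre p1 (C@r)"
          using pre_Cons_cancel[of a p1 "C@r"] less.prems(1) \<open>p = a#p1\<close> r pre_beq_right by auto
        then obtain L1 where L1: "islcm p1 C L1" using less.hyps[OF lr(1), of p1 C] by auto
        have "pre q1 (C'@r)"
          using pre_Cons_cancel[of b q1 "C'@r"] less.prems(2) \<open>q = b#q1\<close> r2 pre_beq_right by auto
        then obtain L2 where L2: "islcm q1 C' L2" using less.hyps[OF lr(2), of q1 C'] by auto
        obtain M1 where M1: "(C@M1) ~~ L1" using L1 unfolding islcm_def pre_def by auto
        obtain M2 where M2: "(C'@M2) ~~ L2" using L2 unfolding islcm_def pre_def by auto
        have "pre L1 (C@r)" using L1 \<open>pre p1 (C@r)\<close> unfolding islcm_def by auto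
        then have pM1: "pre (C@M1) (C@r)" using pre_beq_left beq_sym[OF M1] by blast
        have "pre L2 (C'@r)" using L2 \<open>pre q1 (C'@r)\<close> unfolding islcm_def by auto
        then have pM2: "pre (C'@M2) (C'@r)" using pre_beq_left beq_sym[OF M2] by blast
        obtain L3 where L3: "islcm M1 M2 L3"
          using less.hyps[OF lr(3)] pre_app_cancel[OF pM1] pre_app_cancel[OF pM2] by blast
        have "islcm p q (a#C@L3)" unfolding islcm_def
        proof (intro conjI allI impI)
          have "pre p1 L1" using L1 unfolding islcm_def by auto
          moreover have "pre L1 (C@L3)"
            using pre_app_mono[of M1 L3 C] L3 M1 pre_beq_left unfolding islcm_def by blast
          ultimately have "pre p1 (C@L3)" by (rule pre_trans)
          then show "pre p (a#C@L3)" using \<open>p = a#p1\<close> pre_Cons_mono by auto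
          have "pre q1 L2" using L2 unfolding islcm_def by auto
          moreover have "pre L2 (C'@L3)"
            using pre_app_mono[of M2 L3 C'] L3 M2 pre_beq_left unfolding islcm_def by blast
          ultimately have "pre q1 (C'@L3)" by (rule pre_trans)
          then have "pre q (b#C'@L3)" using \<open>q = b#q1\<close> pre_Cons_mono by auto
          moreover have "(b#C'@L3) ~~ (a#C@L3)" using beq_app_right[OF beq_sym[OF CC], of L3] by simp
          ultimately show "pre q (a#C@L3)" using pre_beq_right by blast
        next
          fix m assume m: "pre p m" "pre q m"
          have pa: "pre [a] m" "pre [b] m" using m \<open>p = a#p1\<close> \<open>q = b#q1\<close>
            by (auto intro: pre_trans[of _ "a#p1"] pre_trans[of _ "b#q1"] pre_prefix[of "[a]" p1]
                  pre_prefix[of "[b]" q1])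
          obtain m' where m': "m ~~ (a#C@m')" using atom[OF False pa] C_def by auto
          have m2: "m ~~ (b#C'@m')" using m' beq_app_right[OF CC, of m'] beq_trans by auto
          have "pre p1 (C@m')"
            using pre_Cons_cancel[of a p1 "C@m'"] m(1) \<open>p = a#p1\<close> m' pre_beq_right by auto
          then have "pre L1 (C@m')" using L1 unfolding islcm_def by auto
          then have "pre (C@M1) (C@m')" using pre_beq_left beq_sym[OF M1] by blast
          then have 1: "pre M1 m'" by (rule pre_app_cancel)
          have "pre q1 (C'@m')"
            using pre_Cons_cancel[of b q1 "C'@m'"] m(2) \<open>q = b#q1\<close> m2 pre_beq_right by auto
          then have "pre L2 (C'@m')" using L2 unfolding islcm_def by auto
          then have "pre (C'@M2) (C'@m')" using pre_beq_left beq_sym[OF M2] by blast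
          then have 2: "pre M2 m'" by (rule pre_app_cancel)
          have "pre L3 m'" using L3 1 2 unfolding islcm_def by auto
          then have "pre (a#C@L3) (a#C@m')" using pre_app_mono[of L3 m' "a#C"] by simp
          then show "pre (a#C@L3) m" using beq_sym[OF m'] pre_beq_right by blast
        qed
        then show ?thesis by blast
      qed
    qed
  qed
qed


definition sw :: "nat \<Rightarrow> nat \<Rightarrow> nat" where
  "sw a p = (if p = a then Suc a else if p = Suc a then a else p)"

fun pos :: "nat list \<Rightarrow> nat \<Rightarrow> nat" where
  "pos [] p = p"
| "pos (a#w) p = pos w (sw a p)"

definition hit :: "nat \<Rightarrow> nat \<Rightarrow> nat \<Rightarrow> bool" where
  "hit a p q \<longleftrightarrow> (p = a \<and> q = Suc a) \<or> (q = a \<and> p = Suc a)"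

fun cr :: "nat list \<Rightarrow> nat \<Rightarrow> nat \<Rightarrow> nat" where
  "cr [] p q = 0"
| "cr (a#w) p q = (if hit a p q then 1 else 0) + cr w (sw a p) (sw a q)"

definition red :: "nat list \<Rightarrow> bool" where
  "red w \<longleftrightarrow> (\<forall>p q. cr w p q \<le> 1)"

lemma sw_sw[simp]: "sw a (sw a p) = p" unfolding sw_def by auto
lemma sw_inj[simp]: "sw a p = sw a q \<longleftrightarrow> p = q" unfolding sw_def by auto
lemma hit_sw[simp]: "hit a (sw a p) (sw a q) = hit a p q" unfolding hit_def sw_def by auto
lemma hit_sym: "hit a p q = hit a q p" unfolding hit_def by auto

lemma pos_append[simp]: "pos (u@v) p = pos v (pos u p)"
  by (induction u arbitrary: p) auto

lemma cr_append: "cr (u@v) p q = cr u p q + cr v (pos u p) (pos u q)"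
  by (induction u arbitrary: p q) auto

lemma cr_sym: "cr w p q = cr w q p"
  by (induction w arbitrary: p q) (auto simp: hit_sym)

lemma cr_same[simp]: "cr w p p = 0"
  by (induction w arbitrary: p) (auto simp: hit_def)

lemma pos_inj[simp]: "pos w p = pos w q \<longleftrightarrow> p = q"
  by (induction w arbitrary: p q) auto

lemma pos_rev[simp]: "pos (rev w) (pos w p) = p"
  by (induction w arbitrary: p) auto

lemma pos_rev2[simp]: "pos w (pos (rev w) p) = p"
  using pos_rev[of "rev w" p] by simp

lemma far_pos: "far i j \<Longrightarrow> sw j (sw i p) = sw i (sw j p)"
  unfolding far_def sw_def by auto

lemma far_hit: "far i j \<Longrightarrow> hit j (sw i p) (sw i q) = hit j p q"
  unfolding far_def sw_def hit_def by auto

lemma adj_pos: "adj i j \<Longrightarrow> sw i (sw j (sw i p)) = sw j (sw i (sw j p))"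
  unfolding adj_def sw_def by auto

lemma adj_cr: "adj i j \<Longrightarrow> cr [i,j,i] p q = cr [j,i,j] p q"
  unfolding adj_def by (elim disjE) (simp add: sw_def hit_def)+

lemma far_cr: "far i j \<Longrightarrow> cr [i,j] p q = cr [j,i] p q"
  using far_hit[of i j p q] far_hit[of j i p q] by (auto simp: far_sym)

lemma step_inv: "braid_step u v \<Longrightarrow> pos u = pos v \<and> cr u = cr v"
proof (induction rule: braid_step.induct)
  case (comm i j u v)
  then have f: "far i j" unfolding far_def by simp
  have h1: "pos [i,j] = pos [j,i]" using far_pos[OF f] by (auto simp: fun_eq_iff)
  have h2: "cr [i,j] = cr [j,i]" using far_cr[OF f] by (auto simp: fun_eq_iff)
  show ?case by (simp only: fun_eq_iff cr_append pos_append h1 h2) simp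
next
  case (braid j i u v)
  then have f: "adj i j" unfolding adj_def by auto
  have h1: "pos [i,j,i] = pos [j,i,j]" using adj_pos[OF f] by (auto simp: fun_eq_iff)
  have h2: "cr [i,j,i] = cr [j,i,j]" using adj_cr[OF f] by (auto simp: fun_eq_iff)
  show ?case by (simp only: fun_eq_iff cr_append pos_append h1 h2) simp
qed

lemma beq_inv: "u ~~ v \<Longrightarrow> pos u = pos v \<and> cr u = cr v"
  unfolding braid_eq_def by (induction rule: rtranclp_induct) (auto dest: step_inv)

lemma beq_pos: "u ~~ v \<Longrightarrow> pos u p = pos v p" using beq_inv by metis
lemma beq_cr: "u ~~ v \<Longrightarrow> cr u p q = cr v p q" using beq_inv by metis
lemma beq_red: "u ~~ v \<Longrightarrow> red u = red v" unfolding red_def using beq_cr by metis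

lemma sw_less: "p \<noteq> q \<Longrightarrow> (sw a p < sw a q) = ((p < q) \<noteq> hit a p q)"
  unfolding sw_def hit_def by auto

lemma parity: "p \<noteq> q \<Longrightarrow> (pos w p < pos w q) = ((p < q) = even (cr w p q))"
proof (induction w arbitrary: p q)
  case Nil then show ?case by simp
next
  case (Cons a w)
  have "sw a p \<noteq> sw a q" using Cons.prems by simp
  from Cons.IH[OF this] sw_less[OF Cons.prems, of a] show ?case by auto
qed

lemma red_Cons: "red (b#w) \<Longrightarrow> red w"
  unfolding red_def
proof (intro allI)
  fix p q assume "\<forall>p q. cr (b#w) p q \<le> 1"
  then have "cr (b#w) (sw b p) (sw b q) \<le> 1" by blast
  then show "cr w p q \<le> 1" by simp
qed

lemma red_append1: "red (u@v) \<Longrightarrow> red u"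
  unfolding red_def by (metis cr_append le_add1 le_trans)

lemma red_append2: "red (u@v) \<Longrightarrow> red v"
  unfolding red_def
proof (intro allI)
  fix p q assume "\<forall>p q. cr (u@v) p q \<le> 1"
  then have "cr (u@v) (pos (rev u) p) (pos (rev u) q) \<le> 1" by blast
  then show "cr v p q \<le> 1" unfolding cr_append by simp
qed

theorem lemX: "red z \<Longrightarrow> cr z a (Suc a) \<ge> 1 \<Longrightarrow> \<exists>z'. z ~~ (a#z')"
proof (induction "length z" arbitrary: z a rule: less_induct)
  case less
  obtain b w where z: "z = b#w" using less.prems by (cases z) auto
  have rw: "red w" using red_Cons less.prems z by blast
  have crz: "cr z p q \<le> 1" for p q using less.prems unfolding red_def by blast
  show ?case
  proof (cases "b = a")
    case True then show ?thesis using z by (intro exI[of _ w]) simp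
  next
    case ba: False
    show ?thesis
    proof (cases "far b a")
      case True
      have "sw b a = a" "sw b (Suc a) = Suc a" "\<not> hit b a (Suc a)" using True
        unfolding far_def sw_def hit_def by auto
      then have "cr w a (Suc a) \<ge> 1" using less.prems(2) z by simp
      then obtain w1 where w1: "w ~~ a#w1" using less.hyps[of w a] rw z by auto
      have "z ~~ b#a#w1" using z w1 by (simp add: beq_Cons)
      also have "... ~~ a#b#w1" using comm2[OF True] .
      finally show ?thesis by blast
    next
      case False
      then have "b = Suc a \<or> a = Suc b" using ba unfolding far_def by auto
      then show ?thesis
      proof
        assume b: "b = Suc a"
        have c1: "cr w a (Suc (Suc a)) \<ge> 1" using less.prems(2) z b by (simp add: sw_def hit_def)
        have c1': "cr w a (Suc (Suc a)) \<le> 1" using rw unfolding red_def by blast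
        have "cr z (Suc a) (Suc (Suc a)) = 1 + cr w (Suc (Suc a)) (Suc a)" using z b
          by (simp add: sw_def hit_def)
        then have c2: "cr w (Suc a) (Suc (Suc a)) = 0" using crz[of "Suc a" "Suc (Suc a)"] cr_sym by simp
        have "cr w a (Suc a) \<ge> 1"
        proof (rule ccontr)
          assume "\<not> ?thesis"
          then have "cr w a (Suc a) = 0" by simp
          then have "pos w a < pos w (Suc a)" using parity[of a "Suc a" w] by simp
          moreover have "pos w (Suc a) < pos w (Suc (Suc a))" using parity[of "Suc a" "Suc (Suc a)" w] c2 by simp
          moreover have "\<not> pos w a < pos w (Suc (Suc a))" using parity[of a "Suc (Suc a)" w] c1 c1' by simp
          ultimately show False by simp
        qed
        then obtain w1 where w1: "w ~~ a#w1" using less.hyps[of w a] rw z by auto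
        have "cr w1 (Suc a) (Suc (Suc a)) \<ge> 1" using c1 beq_cr[OF w1] by (simp add: sw_def hit_def)
        moreover have "red w1" using red_Cons beq_red[OF w1] rw by blast
        moreover have "length w1 < length z" using beq_length[OF w1] z by simp
        ultimately obtain w2 where w2: "w1 ~~ Suc a # w2" using less.hyps by blast
        have "z ~~ Suc a # a # w1" using z b w1 by (simp add: beq_Cons)
        also have "... ~~ Suc a # a # Suc a # w2" using w2 by (simp add: beq_Cons)
        also have "... ~~ a # Suc a # a # w2" using braid3[of "Suc a" a w2] by (simp add: adj_def)
        finally show ?thesis by blast
      next
        assume a: "a = Suc b"
        have c1: "cr w b (Suc a) \<ge> 1" using less.prems(2) z a by (simp add: sw_def hit_def)
        have c1': "cr w b (Suc a) \<le> 1" using rw unfolding red_def by blast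
        have "cr z b a = 1 + cr w a b" using z a by (simp add: sw_def hit_def)
        then have c2: "cr w b a = 0" using crz[of b a] cr_sym by simp
        have "cr w a (Suc a) \<ge> 1"
        proof (rule ccontr)
          assume "\<not> ?thesis"
          then have "cr w a (Suc a) = 0" by simp
          then have "pos w a < pos w (Suc a)" using parity[of a "Suc a" w] by simp
          moreover have "pos w b < pos w a" using parity[of b a w] c2 a by simp
          moreover have "\<not> pos w b < pos w (Suc a)" using parity[of b "Suc a" w] c1 c1' a by simp
          ultimately show False by simp
        qed
        then obtain w1 where w1: "w ~~ a#w1" using less.hyps[of w a] rw z by auto
        have "cr w1 b (Suc b) \<ge> 1" using c1 beq_cr[OF w1] a by (simp add: sw_def hit_def cr_sym)
        moreover have "red w1" using red_Cons beq_red[OF w1] rw by blast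
        moreover have "length w1 < length z" using beq_length[OF w1] z by simp
        ultimately obtain w2 where w2: "w1 ~~ b # w2" using less.hyps by blast
        have "z ~~ b # a # w1" using z w1 by (simp add: beq_Cons)
        also have "... ~~ b # a # b # w2" using w2 by (simp add: beq_Cons)
        also have "... ~~ a # b # a # w2" using braid3[of b a w2] a by (simp add: adj_def)
        finally show ?thesis by blast
      qed
    qed
  qed
qed

lemma step_rev: "braid_step u v \<Longrightarrow> braid_step (rev u) (rev v)"
proof (induction rule: braid_step.induct)
  case (comm i j u v) then show ?case using braid_step.comm[of j i "rev v" "rev u"] by auto
next
  case (braid j i u v) then show ?case using braid_step.braid[of j i "rev v" "rev u"] by auto
qed

lemma beq_rev: "u ~~ v \<Longrightarrow> rev u ~~ rev v"
  unfolding braid_eq_def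
  by (induction rule: rtranclp_induct) (auto intro: rtranclp.rtrancl_into_rtrancl step_rev)

lemma cr_rev: "cr (rev w) (pos w p) (pos w q) = cr w p q"
proof (induction w arbitrary: p q)
  case Nil then show ?case by simp
next
  case (Cons a w)
  show ?case using Cons.IH[of "sw a p" "sw a q"] by (simp add: cr_append)
qed

lemma red_rev: "red w \<Longrightarrow> red (rev w)"
  unfolding red_def
proof (intro allI)
  fix p q assume "\<forall>p q. cr w p q \<le> 1"
  then show "cr (rev w) p q \<le> 1" using cr_rev[of w "pos (rev w) p" "pos (rev w) q"] by simp
qed

theorem lemXR:
  assumes "red z" "cr z p q \<ge> 1" "pos z p = a" "pos z q = Suc a"
  shows "\<exists>z'. z ~~ (z'@[a])"
proof -
  have "cr (rev z) a (Suc a) \<ge> 1" using cr_rev[of z p q] assms by simp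
  then obtain y where "rev z ~~ a#y" using lemX red_rev[OF assms(1)] by blast
  then have "rev (rev z) ~~ rev (a#y)" by (rule beq_rev)
  then show ?thesis by auto
qed


lemma pos_fix: "(\<forall>a\<in>set w. p \<noteq> a \<and> p \<noteq> Suc a) \<Longrightarrow> pos w p = p"
  by (induction w) (auto simp: sw_def)

lemma cr_fix: "(\<forall>a\<in>set w. p \<noteq> a \<and> p \<noteq> Suc a) \<Longrightarrow> cr w p q = 0"
  by (induction w arbitrary: q) (auto simp: sw_def hit_def)

lemma pos_range: "set w \<subseteq> {1..<m} \<Longrightarrow> 1 \<le> p \<Longrightarrow> p \<le> m \<Longrightarrow> 1 \<le> pos w p \<and> pos w p \<le> m"
proof (induction w arbitrary: p)
  case Nil then show ?case by simp
next
  case (Cons a w)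
  have "1 \<le> sw a p \<and> sw a p \<le> m" using Cons.prems unfolding sw_def by auto
  then show ?case using Cons by simp
qed

lemma pos_upt: "k \<le> j \<Longrightarrow> pos [k..<j] p = (if p = k then j else if k < p \<and> p \<le> j then p - 1 else p)"
proof (induction j)
  case 0 then show ?case by simp
next
  case (Suc j)
  show ?case
  proof (cases "k = Suc j")
    case True then show ?thesis by simp
  next
    case False
    then have kj: "k \<le> j" using Suc.prems by simp
    have e: "pos [k..<Suc j] p = sw j (pos [k..<j] p)" using kj by simp
    show ?thesis unfolding e Suc.IH[OF kj] sw_def using kj False by auto
  qed
qed

lemma pos_upt_j: "k \<le> j \<Longrightarrow> pos [k..<j] p = j \<longleftrightarrow> p = k"
  using pos_upt[of k j p] by auto
lemma pos_upt_Sj: "k \<le> j \<Longrightarrow> pos [k..<j] p = Suc j \<longleftrightarrow> p = Suc j"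
  using pos_upt[of k j p] by auto

lemma cr_upt: "k \<le> j \<Longrightarrow> cr [k..<j] p q = (if (p = k \<and> k < q \<and> q \<le> j) \<or> (q = k \<and> k < p \<and> p \<le> j) then 1 else 0)"
proof (induction j)
  case 0 then show ?case by auto
next
  case (Suc j)
  show ?case
  proof (cases "k = Suc j")
    case True then show ?thesis by auto
  next
    case False
    then have kj: "k \<le> j" using Suc.prems by simp
    have h: "hit j (pos [k..<j] p) (pos [k..<j] q) \<longleftrightarrow> (p = k \<and> q = Suc j) \<or> (q = k \<and> p = Suc j)"
      unfolding hit_def using pos_upt_j[OF kj] pos_upt_Sj[OF kj] by metis
    have "cr [k..<Suc j] p q = cr [k..<j] p q + (if hit j (pos [k..<j] p) (pos [k..<j] q) then 1 else 0)"
      using kj by (simp add: cr_append)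
    also have "... = (if (p = k \<and> k < q \<and> q \<le> j) \<or> (q = k \<and> k < p \<and> p \<le> j) then 1 else 0)
       + (if (p = k \<and> q = Suc j) \<or> (q = k \<and> p = Suc j) then 1 else 0)"
      using Suc.IH[OF kj] h by simp
    also have "... = (if (p = k \<and> k < q \<and> q \<le> Suc j) \<or> (q = k \<and> k < p \<and> p \<le> Suc j) then 1 else 0)"
      using kj by (auto simp: le_Suc_eq)
    finally show ?thesis .
  qed
qed

lemma Delta_set: "set (Delta m) \<subseteq> {1..<m}"
  by (induction m) auto

lemma Delta_words: "Delta m \<in> words m"
  using Delta_set unfolding words_def by auto

lemma cr_Delta: "cr (Delta m) p q = (if p \<noteq> q \<and> 1 \<le> p \<and> p \<le> m \<and> 1 \<le> q \<and> q \<le> m then 1 else 0)"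
proof (induction m arbitrary: p q)
  case 0 then show ?case by simp
next
  case (Suc m)
  define P where "P = pos [1..<Suc m] p"
  define Q where "Q = pos [1..<Suc m] q"
  have e: "cr (Delta (Suc m)) p q = cr [1..<Suc m] p q + cr (Delta m) P Q"
    unfolding P_def Q_def by (simp add: cr_append)
  have PQ: "P \<noteq> Q \<longleftrightarrow> p \<noteq> q" unfolding P_def Q_def by simp
  have Pr: "(1 \<le> P \<and> P \<le> m) \<longleftrightarrow> (2 \<le> p \<and> p \<le> Suc m)"
    unfolding P_def using pos_upt[of 1 "Suc m" p] by auto
  have Qr: "(1 \<le> Q \<and> Q \<le> m) \<longleftrightarrow> (2 \<le> q \<and> q \<le> Suc m)"
    unfolding Q_def using pos_upt[of 1 "Suc m" q] by auto
  have c: "cr [1..<Suc m] p q = (if (p = 1 \<and> 1 < q \<and> q \<le> Suc m) \<or> (q = 1 \<and> 1 < p \<and> p \<le> Suc m) then 1 else 0)"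
    using cr_upt[of 1 "Suc m" p q] by simp
  show ?case unfolding e Suc.IH[of P Q] c using PQ Pr Qr by auto
qed

lemma pos_Delta: "1 \<le> p \<Longrightarrow> p \<le> m \<Longrightarrow> pos (Delta m) p = Suc m - p"
proof (induction m arbitrary: p)
  case 0 then show ?case by simp
next
  case (Suc m)
  have e: "pos (Delta (Suc m)) p = pos (Delta m) (pos [1..<Suc m] p)" by simp
  show ?case
  proof (cases "p = 1")
    case True
    have "pos (Delta m) (Suc m) = Suc m" using Delta_set[of m] by (intro pos_fix) auto
    then show ?thesis using e True pos_upt[of 1 "Suc m"] by simp
  next
    case False
    then show ?thesis using e Suc pos_upt[of 1 "Suc m" p] by simp
  qed
qed

lemma red_Delta: "red (Delta m)"
  unfolding red_def cr_Delta by simp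


lemma simple_red: "pre x (Delta m) \<Longrightarrow> red x"
  unfolding pre_def
proof -
  assume "\<exists>z. (x@z) ~~ Delta m"
  then obtain z where "(x@z) ~~ Delta m" by blast
  then have "red (x@z)" using beq_red red_Delta by blast
  then show "red x" by (rule red_append1)
qed

theorem red_simple: "set w \<subseteq> {1..<m} \<Longrightarrow> red w \<Longrightarrow> pre w (Delta m)"
proof (induction w rule: rev_induct)
  case Nil then show ?case by simp
next
  case (snoc a w)
  have rw: "red w" using red_append1 snoc.prems by blast
  have sw': "set w \<subseteq> {1..<m}" and am: "a \<in> {1..<m}" using snoc.prems by auto
  obtain z where z: "(w@z) ~~ Delta m" using snoc.IH sw' rw unfolding pre_def by blast
  define P where "P = pos (rev w) a"
  define Q where "Q = pos (rev w) (Suc a)"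
  have PQ: "pos w P = a" "pos w Q = Suc a" unfolding P_def Q_def by simp_all
  have "set (rev w) \<subseteq> {1..<m}" using sw' by simp
  then have rP: "1 \<le> P \<and> P \<le> m" "1 \<le> Q \<and> Q \<le> m" "P \<noteq> Q" using am unfolding P_def Q_def
    using pos_range[of "rev w" m a] pos_range[of "rev w" m "Suc a"] by auto
  have "cr (w@[a]) P Q \<le> 1" using snoc.prems unfolding red_def by blast
  then have c0: "cr w P Q = 0" using PQ by (simp add: cr_append hit_def)
  have "cr (Delta m) P Q = 1" using rP by (simp add: cr_Delta)
  then have "cr (w@z) P Q = 1" using beq_cr[OF z] by simp
  then have c1: "cr z a (Suc a) = 1" using c0 PQ by (simp add: cr_append)
  have "red (w@z)" using beq_red[OF z] red_Delta by simp
  then have "red z" by (rule red_append2)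
  then obtain z'' where z'': "z ~~ a#z''" using lemX c1 by fastforce
  have "((w@[a])@z'') ~~ (w@z)" using beq_app_left[OF beq_sym[OF z''], of w] by simp
  then have "((w@[a])@z'') ~~ Delta m" using z beq_trans by blast
  then show ?case unfolding pre_def by blast
qed

lemma ldiv_pre: "y \<in> words m \<Longrightarrow> ldiv m x y \<longleftrightarrow> pre x y"
  unfolding ldiv_def pre_def words_def
proof safe
  fix z assume "set y \<subseteq> {1..<m}" "(x@z) ~~ y"
  then show "\<exists>z\<in>{w. set w \<subseteq> {1..<m}}. (x@z) ~~ y" using beq_set by fastforce
qed auto

lemma rdiv_iff: "y \<in> words m \<Longrightarrow> rdiv m x y \<longleftrightarrow> (\<exists>z. (z@x) ~~ y)"
  unfolding rdiv_def words_def
proof safe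
  fix z assume "set y \<subseteq> {1..<m}" "(z@x) ~~ y"
  then show "\<exists>z\<in>{w. set w \<subseteq> {1..<m}}. (z@x) ~~ y" using beq_set by fastforce
qed auto

lemma simple_iff: "simple m x \<longleftrightarrow> x \<in> words m \<and> red x"
  unfolding simple_def using ldiv_pre[OF Delta_words] simple_red red_simple words_def by blast

lemma lemE:
  assumes "x \<in> words m" "red x" "i \<in> {1..<m}" "i \<notin> D_R m x"
  shows "red (x@[i])"
proof (rule ccontr)
  assume "\<not> red (x@[i])"
  then obtain p q where pq: "cr (x@[i]) p q > 1" unfolding red_def by (meson not_le)
  have "cr x p q \<le> 1" using assms(2) unfolding red_def by blast
  then have h: "hit i (pos x p) (pos x q)" "cr x p q = 1" using pq by (auto simp: cr_append split: if_splits)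
  have "\<exists>z. (z@[i]) ~~ x"
  proof (cases "pos x p = i")
    case True
    then have "pos x q = Suc i" using h(1) unfolding hit_def by auto
    then show ?thesis using lemXR[OF assms(2), of p q i] h True beq_sym by fastforce
  next
    case False
    then have "pos x q = i" "pos x p = Suc i" using h(1) unfolding hit_def by auto
    then show ?thesis using lemXR[OF assms(2), of q p i] h cr_sym[of x p q] beq_sym by fastforce
  qed
  then have "i \<in> D_R m x" unfolding D_R_def using rdiv_iff[OF assms(1)] assms(3) by auto
  then show False using assms(4) by simp
qed

lemma D_L_iff: "y \<in> words m \<Longrightarrow> i \<in> D_L m y \<longleftrightarrow> i \<in> {1..<m} \<and> pre [i] y"
  unfolding D_L_def using ldiv_pre by auto

lemma D_R_iff: "x \<in> words m \<Longrightarrow> i \<in> D_R m x \<longleftrightarrow> i \<in> {1..<m} \<and> (\<exists>z. (z@[i]) ~~ x)"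
  unfolding D_R_def using rdiv_iff by auto

lemma words_app: "x \<in> words m \<Longrightarrow> y \<in> words m \<Longrightarrow> x@y \<in> words m"
  unfolding words_def by auto

lemma not_red_cc: "\<not> red (z@[c,c]@t)"
proof
  assume "red (z@[c,c]@t)"
  then have "red ([c,c]@t)" by (rule red_append2)
  then have "red [c,c]" by (rule red_append1)
  then have "cr [c,c] c (Suc c) \<le> 1" unfolding red_def by blast
  then show False by (simp add: sw_def hit_def)
qed

theorem criterion:
  assumes x: "x \<in> words m" "red x" and y: "y \<in> words m" "red y"
  shows "normal m x y \<longleftrightarrow> D_L m y \<subseteq> D_R m x"
proof
  assume N: "normal m x y"
  show "D_L m y \<subseteq> D_R m x"
  proof
    fix i assume i: "i \<in> D_L m y"
    then have im: "i \<in> {1..<m}" "pre [i] y" using D_L_iff[OF y(1)] by auto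
    show "i \<in> D_R m x"
    proof (rule ccontr)
      assume "i \<notin> D_R m x"
      then have r: "red (x@[i])" using lemE x im by blast
      have w: "x@[i] \<in> words m" using x im unfolding words_def by auto
      have "pre (x@[i]) (Delta m)" using red_simple r w unfolding words_def by blast
      then have "ldiv m (x@[i]) (Delta m)" using ldiv_pre[OF Delta_words] by simp
      moreover have "ldiv m (x@[i]) (x@y)" using ldiv_pre[OF words_app[OF x(1) y(1)]]
        pre_app_mono[OF im(2), of x] by simp
      ultimately have "ldiv m (x@[i]) x" using N w unfolding normal_def by blast
      then have "pre (x@[i]) x" using ldiv_pre[OF x(1)] by simp
      then show False using pre_length by fastforce
    qed
  qed
next
  assume DD: "D_L m y \<subseteq> D_R m x"
  have xy: "x@y \<in> words m" using words_app x y by blast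
  have xD: "pre x (Delta m)" using red_simple x unfolding words_def by blast
  show "normal m x y" unfolding normal_def
  proof (intro conjI ballI impI)
    show "ldiv m x (Delta m)" using xD ldiv_pre[OF Delta_words] by simp
    show "ldiv m x (x@y)" using ldiv_pre[OF xy] by simp
  next
    fix w assume w: "w \<in> words m" "ldiv m w (Delta m)" "ldiv m w (x@y)"
    have wD: "pre w (Delta m)" and wxy: "pre w (x@y)" using w ldiv_pre[OF Delta_words] ldiv_pre[OF xy] by auto
    obtain L where L: "islcm w x L" using lcm_exists[OF wxy pre_appI[of x y]] by blast
    have LD: "pre L (Delta m)" using L wD xD unfolding islcm_def by blast
    have Lxy: "pre L (x@y)" using L wxy unfolding islcm_def by simp
    have rL: "red L" using simple_red[OF LD] .
    obtain t where t: "(x@t) ~~ L" using L unfolding islcm_def pre_def by blast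
    obtain s where s: "(L@s) ~~ (x@y)" using Lxy unfolding pre_def by blast
    have "(x@(t@s)) ~~ (x@y)" using beq_trans[OF beq_app_right[OF t, of s] s] by simp
    then have ts: "(t@s) ~~ y" by (rule cancel)
    show "ldiv m w x"
    proof (cases t)
      case Nil
      then have "L ~~ x" using t beq_sym by simp
      then have "pre w x" using L pre_beq_right unfolding islcm_def by blast
      then show ?thesis using ldiv_pre[OF x(1)] by simp
    next
      case (Cons c t')
      have "pre [c] y" using ts Cons unfolding pre_def by (intro exI[of _ "t'@s"]) simp
      moreover have "c \<in> {1..<m}" using beq_set[OF ts] Cons y(1) unfolding words_def by auto
      ultimately have "c \<in> D_L m y" using D_L_iff[OF y(1)] by simp
      then have "c \<in> D_R m x" using DD by blast
      then obtain z where z: "(z@[c]) ~~ x" using D_R_iff[OF x(1)] by blast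
      have "(z@[c,c]@t') ~~ (x@t)" using beq_app_right[OF z, of "c#t'"] Cons by simp
      then have "red (z@[c,c]@t')" using beq_red t rL by (meson beq_trans)
      then show ?thesis using not_red_cc by blast
    qed
  qed
qed


declare upt_Suc[simp del]

lemma concat_nth_blocks:
  assumes "\<forall>x. length (f x) = L" "k < L * length xs"
  shows "concat (map f xs) ! k = f (xs ! (k div L)) ! (k mod L)"
  using assms(2)
proof (induction xs arbitrary: k)
  case Nil then show ?case by simp
next
  case (Cons x xs)
  have L0: "L > 0" using Cons.prems by (cases "L = 0") auto
  show ?case
  proof (cases "k < L")
    case True then show ?thesis using assms(1) by (simp add: nth_append)
  next
    case False
    then have "k - L < L * length xs" using Cons.prems by (simp add: algebra_simps)
    then have "concat (map f xs) ! (k - L) = f (xs ! ((k - L) div L)) ! ((k - L) mod L)" using Cons.IH by blast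
    moreover have "k div L = Suc ((k - L) div L)" using False L0 by (simp add: le_div_geq)
    moreover have "k mod L = (k - L) mod L" using False by (simp add: le_mod_geq)
    ultimately show ?thesis using False assms(1) by (simp add: nth_append)
  qed
qed

lemma length_concat_blocks: "\<forall>x. length (f x) = L \<Longrightarrow> length (concat (map f xs)) = L * length xs"
  by (induction xs) auto

lemma length_simples[simp]: "length (simples n) = fact n"
proof (induction n)
  case 0 then show ?case by simp
next
  case (Suc m)
  have "length (simples (Suc m)) = fact m * length (rev [1..<Suc (Suc m)])"
    by (subst simples.simps, rule length_concat_blocks) (simp add: Suc)
  then show ?case by simp
qed

lemma simples_nth:
  assumes "k < fact (Suc m)"
  shows "simples (Suc m) ! k = [Suc m - k div fact m..<Suc m] @ simples m ! (k mod fact m)"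
proof -
  let ?f = "\<lambda>i. map (\<lambda>x. sigma_seg i (Suc m) @ x) (simples m)"
  have k: "k < fact m * length (rev [1..<Suc (Suc m)])" using assms by (simp add: algebra_simps)
  have fm: "fact m > (0::nat)" by simp
  have "k < Suc m * fact m" using assms by simp
  then have d: "k div fact m < Suc m" using fm by (simp add: div_less_iff_less_mult)
  have "simples (Suc m) ! k = ?f (rev [1..<Suc (Suc m)] ! (k div fact m)) ! (k mod fact m)"
    by (subst simples.simps, rule concat_nth_blocks[OF _ k]) simp
  moreover have "rev [1..<Suc (Suc m)] ! (k div fact m) = Suc m - k div fact m"
    using d by (simp add: rev_nth)
  moreover have "k mod fact m < length (simples m)" using fm by simp
  ultimately show ?thesis by (simp add: sigma_seg_def)
qed

lemma simples_nth_low: "l < fact m \<Longrightarrow> simples (Suc m) ! l = simples m ! l"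
proof -
  assume l: "l < fact m"
  have "fact m \<le> (fact (Suc m) :: nat)" by (simp add: fact_mono)
  then have "l < fact (Suc m)" using l by linarith
  then show ?thesis using simples_nth[of l m] l by simp
qed

lemma simples_0: "simples n ! 0 = []"
proof (induction n)
  case 0 then show ?case by simp
next
  case (Suc m) then show ?case using simples_nth_low[of 0 m] by simp
qed

lemma red_seg:
  assumes "set y \<subseteq> {1..<m}" "red y" "i \<le> Suc m"
  shows "red ([i..<Suc m] @ y)"
  unfolding red_def
proof (intro allI)
  fix p q
  have fx: "cr y (Suc m) r = 0" for r using assms(1) by (intro cr_fix) auto
  have pi: "pos [i..<Suc m] i = Suc m" using pos_upt[OF assms(3), of i] by simp
  have e: "cr ([i..<Suc m] @ y) p q = cr [i..<Suc m] p q + cr y (pos [i..<Suc m] p) (pos [i..<Suc m] q)"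
    by (simp only: cr_append)
  have c1: "cr y (pos [i..<Suc m] p) (pos [i..<Suc m] q) \<le> 1" using assms(2) unfolding red_def by blast
  show "cr ([i..<Suc m] @ y) p q \<le> 1"
  proof (cases "(p = i \<and> i < q \<and> q \<le> Suc m) \<or> (q = i \<and> i < p \<and> p \<le> Suc m)")
    case True
    then have "cr [i..<Suc m] p q = 1" using cr_upt[OF assms(3), of p q] by presburger
    moreover have "cr y (pos [i..<Suc m] p) (pos [i..<Suc m] q) = 0"
      using True pi fx cr_sym[of y] by metis
    ultimately show ?thesis using e by simp
  next
    case False
    then have "cr [i..<Suc m] p q = 0" using cr_upt[OF assms(3), of p q] by presburger
    then show ?thesis using e c1 by simp
  qed
qed

lemma simples_good: "x \<in> set (simples n) \<Longrightarrow> set x \<subseteq> {1..<n} \<and> red x"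
proof (induction n arbitrary: x)
  case 0 then show ?case by (simp add: red_def)
next
  case (Suc m)
  then obtain i y where iy: "i \<in> set (rev [1..<Suc (Suc m)])" "y \<in> set (simples m)"
    "x = sigma_seg i (Suc m) @ y" by auto
  have y: "set y \<subseteq> {1..<m}" "red y" using Suc.IH iy(2) by auto
  have i: "1 \<le> i" "i \<le> Suc m" using iy(1) by auto
  have "red x" using red_seg[OF y i(2)] iy(3) by (simp add: sigma_seg_def)
  moreover have "set x \<subseteq> {1..<Suc m}" using iy(3) y(1) i unfolding sigma_seg_def by auto
  ultimately show ?case by blast
qed

lemma simples_nth_good: "k < fact n \<Longrightarrow> set (simples n ! k) \<subseteq> {1..<n} \<and> red (simples n ! k)"
  using simples_good[of "simples n ! k" n] nth_mem[of k "simples n"] by simp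

lemma simples_last: "simples n ! (fact n - 1) = Delta n"
proof (induction n)
  case 0 then show ?case by simp
next
  case (Suc m)
  have fm: "fact m > (0::nat)" by simp
  have k: "fact (Suc m) - 1 < (fact (Suc m) :: nat)" by simp
  have e: "(fact (Suc m) - 1 :: nat) = (fact m - 1) + m * fact m" using fm by (simp add: algebra_simps)
  have dm: "(fact (Suc m) - 1 :: nat) div fact m = m" "(fact (Suc m) - 1 :: nat) mod fact m = fact m - 1"
    unfolding e using fm by (simp_all only: div_mult_self1 mod_mult_self1) simp_all
  show ?case using simples_nth[OF k] dm Suc.IH by simp
qed

lemma length_Delta: "length (Delta (Suc m)) = m + length (Delta m)"
  by simp

lemma simples_length: "k < fact n \<Longrightarrow> length (simples n ! k) + (if k = fact n - 1 then 0 else 1) \<le> length (Delta n)"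
proof (induction n arbitrary: k)
  case 0 then show ?case by simp
next
  case (Suc m)
  have fm: "fact m > (0::nat)" by simp
  let ?d = "k div fact m" and ?r = "k mod fact m"
  have "k < Suc m * fact m" using Suc.prems by simp
  then have "?d < Suc m" using fm by (simp add: div_less_iff_less_mult)
  then have d: "?d \<le> m" by simp
  have r: "?r < fact m" using fm by simp
  have e: "length (simples (Suc m) ! k) = ?d + length (simples m ! ?r)"
    using simples_nth[OF Suc.prems] d by simp
  have IH: "length (simples m ! ?r) + (if ?r = fact m - 1 then 0 else 1) \<le> length (Delta m)"
    using Suc.IH[OF r] .
  have kk: "k = ?d * fact m + ?r" by simp
  have "k = (fact (Suc m) - 1 :: nat) \<longleftrightarrow> ?d = m \<and> ?r = fact m - 1"
  proof
    assume "k = (fact (Suc m) - 1 :: nat)"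
    then have e: "k = (fact m - 1) + m * fact m" using fm by (simp add: algebra_simps)
    show "?d = m \<and> ?r = fact m - 1" unfolding e using fm by (simp_all only: div_mult_self1 mod_mult_self1) simp
  next
    assume "?d = m \<and> ?r = fact m - 1"
    then show "k = (fact (Suc m) - 1 :: nat)" using kk fm by (simp add: algebra_simps)
  qed
  then show ?case using e IH d by (auto split: if_splits)
qed


lemma simples_nonempty: "k < fact n \<Longrightarrow> k \<noteq> 0 \<Longrightarrow> simples n ! k \<noteq> []"
proof (induction n arbitrary: k)
  case 0 then show ?case by simp
next
  case (Suc m)
  have fm: "fact m > (0::nat)" by simp
  have e: "simples (Suc m) ! k = [Suc m - k div fact m..<Suc m] @ simples m ! (k mod fact m)"
    using simples_nth[OF Suc.prems(1)] .
  show ?case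
  proof (cases "k div fact m = 0")
    case True
    then have "k mod fact m = k" "k < fact m" using fm by (auto simp: div_eq_0_iff)
    then show ?thesis using e Suc.IH[of k] Suc.prems by simp
  next
    case False
    then have "Suc m - k div fact m < Suc m" by simp
    then show ?thesis using e by simp
  qed
qed


declare upt_Suc[simp del]

lemma DL_eq: "y \<in> words m \<Longrightarrow> D_L (Suc m) y = D_L m y"
proof -
  assume y: "y \<in> words m"
  then have y': "y \<in> words (Suc m)" unfolding words_def by auto
  show ?thesis
  proof (rule set_eqI)
    fix i
    have "i \<in> {1..<m}" if P: "pre [i] y"
    proof -
      obtain z where "([i]@z) ~~ y" using P unfolding pre_def by blast
      then have "i \<in> set y" using beq_set by force
      then show ?thesis using y unfolding words_def by auto
    qed
    then show "i \<in> D_L (Suc m) y \<longleftrightarrow> i \<in> D_L m y" unfolding D_L_iff[OF y] D_L_iff[OF y']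
      by (meson atLeastLessThan_iff less_SucI)
  qed
qed

lemma DR_block:
  assumes x: "x \<in> words m" "red x" and i: "1 \<le> i" "i \<le> Suc m" and j: "j \<in> {1..<m}"
  shows "j \<in> D_R (Suc m) ([i..<Suc m] @ x) \<longleftrightarrow> j \<in> D_R m x"
proof -
  let ?s = "[i..<Suc m]"
  let ?w = "?s @ x"
  have w: "?w \<in> words (Suc m)" using x i unfolding words_def by auto
  show ?thesis
  proof
    assume "j \<in> D_R (Suc m) ?w"
    then obtain z where z: "(z@[j]) ~~ ?w" using D_R_iff[OF w] by blast
    define P where "P = pos (rev ?w) j"
    define Q where "Q = pos (rev ?w) (Suc j)"
    have PQ: "pos ?w P = j" "pos ?w Q = Suc j" unfolding P_def Q_def by (simp_all only: pos_rev2)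
    have "pos (z@[j]) P = j" "pos (z@[j]) Q = Suc j" using PQ beq_pos[OF z] by simp_all
    then have zPQ: "pos z P = Suc j" "pos z Q = j" by (auto simp: sw_def split: if_splits)
    have "cr (z@[j]) P Q \<ge> 1" using zPQ by (simp add: cr_append hit_def)
    then have c: "cr ?w P Q \<ge> 1" using beq_cr[OF z] by simp
    have fx: "pos x (Suc m) = Suc m" using x(1) unfolding words_def by (intro pos_fix) auto
    have "pos ?w i = Suc m" using pos_upt[OF i(2), of i] fx by simp
    then have "P \<noteq> i" "Q \<noteq> i" using PQ j by auto
    then have "cr ?s P Q = 0" using cr_upt[OF i(2), of P Q] by auto
    then have c2: "cr x (pos ?s P) (pos ?s Q) \<ge> 1" using c by (simp add: cr_append)
    have "pos x (pos ?s P) = j" "pos x (pos ?s Q) = Suc j" using PQ by simp_all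
    then obtain z' where "x ~~ (z'@[j])" using lemXR[OF x(2) c2] by blast
    then have "(z'@[j]) ~~ x" by (rule beq_sym)
    then show "j \<in> D_R m x" unfolding D_R_iff[OF x(1)] using j by blast
  next
    assume "j \<in> D_R m x"
    then obtain z where z: "(z@[j]) ~~ x" using D_R_iff[OF x(1)] by blast
    then have h: "((?s@z)@[j]) ~~ ?w" using beq_app_left[OF z, of ?s] by simp
    have "\<exists>z'. (z'@[j]) ~~ ?w" by (rule exI[of _ "?s@z"]) (rule h)
    then show "j \<in> D_R (Suc m) ?w" unfolding D_R_iff[OF w] using j by simp
  qed
qed

lemma tau_good: "k \<in> {1..fact n} \<Longrightarrow> tau n k \<in> words n \<and> red (tau n k)"
proof -
  assume "k \<in> {1..fact n}"
  then have "k - 1 < fact n" by auto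
  then show ?thesis using simples_nth_good[of "k - 1" n] unfolding tau_def words_def by blast
qed

lemma red_single: "red [c]"
  unfolding red_def by simp

lemma M_normal: "M n k l = 1 \<longleftrightarrow> normal n (tau n k) (tau n l)"
  unfolding M_def by simp
lemma M_normal0: "M n k l = 0 \<longleftrightarrow> \<not> normal n (tau n k) (tau n l)"
  unfolding M_def by simp

lemma M_crit: "k \<in> {1..fact n} \<Longrightarrow> l \<in> {1..fact n} \<Longrightarrow>
   M n k l = (if D_L n (tau n l) \<subseteq> D_R n (tau n k) then 1 else 0)"
proof -
  assume k: "k \<in> {1..fact n}" and l: "l \<in> {1..fact n}"
  have "normal n (tau n k) (tau n l) \<longleftrightarrow> D_L n (tau n l) \<subseteq> D_R n (tau n k)"
    using criterion tau_good[OF k] tau_good[OF l] by blast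
  then show ?thesis unfolding M_def by simp
qed

theorem lemma2p5:
  fixes n :: nat
  assumes "n \<ge> 2"
  shows
    "(\<forall>k \<in> {1..fact n}. M n k 1 = 1) \<and>
     (\<forall>l \<in> {1..fact n}. M n (fact n) l = 1) \<and>
     (\<forall>l \<in> {2..fact n}. M n 1 l = 0) \<and>
     (\<forall>k \<in> {1..<fact n}. M n k (fact n) = 0) \<and>
     (\<forall>k \<in> {1..fact n}. \<forall>l \<in> {1..fact (n - 1)}.
        M n k l = M (n - 1) ((k - 1) mod fact (n - 1) + 1) l) \<and>
     (\<forall>k \<in> {1..fact n}. \<forall>k' \<in> {1..fact n}.
        D_R n (tau n k) = D_R n (tau n k') \<longrightarrow> (\<forall>l \<in> {1..fact n}. M n k l = M n k' l)) \<and>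
     (\<forall>l \<in> {1..fact n}. \<forall>l' \<in> {1..fact n}.
        D_L n (tau n l) = D_L n (tau n l') \<longrightarrow> (\<forall>k \<in> {1..fact n}. M n k l = M n k l'))"
proof (intro conjI ballI impI)
  have f1: "(1::nat) \<in> {1..fact n}" by (simp add: fact_ge_1)
  have ff: "(fact n::nat) \<in> {1..fact n}" by (simp add: fact_ge_1)
  have t1: "tau n 1 = []" unfolding tau_def by (simp add: simples_0)
  have tf: "tau n (fact n) = Delta n" unfolding tau_def using simples_last by simp
  fix k :: nat assume k: "k \<in> {1..fact n}"
  have e: "[] \<in> words n" by (simp add: words_def)
  have "i \<notin> D_L n []" for i
  proof
    assume "i \<in> D_L n []"
    then have "pre [i] []" using D_L_iff[OF e] by blast
    then show False using pre_length by fastforce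
  qed
  then have "D_L n [] = {}" by blast
  then show "M n k 1 = 1" using M_crit[OF k f1] t1 by simp
next
  fix l :: nat assume l: "l \<in> {1..fact n}"
  have tf: "tau n (fact n) = Delta n" unfolding tau_def using simples_last by simp
  have y: "tau n l \<in> words n" using tau_good[OF l] by blast
  have "normal n (Delta n) (tau n l)" unfolding normal_def
  proof (intro conjI ballI impI)
    show "ldiv n (Delta n) (Delta n)" using ldiv_pre[OF Delta_words] by simp
    show "ldiv n (Delta n) (Delta n @ tau n l)" using ldiv_pre[OF words_app[OF Delta_words y]] by simp
  qed
  then show "M n (fact n) l = 1" using tf unfolding M_def by simp
next
  fix l :: nat assume l: "l \<in> {2..fact n}"
  have f1: "(1::nat) \<in> {1..fact n}" by (simp add: fact_ge_1)
  have l1: "l \<in> {1..fact n}" using l by simp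
  have t1: "tau n 1 = []" unfolding tau_def by (simp add: simples_0)
  have y: "tau n l \<in> words n" using tau_good[OF l1] by blast
  have "l - 1 < fact n" "l - 1 \<noteq> 0" using l by auto
  then have "tau n l \<noteq> []" unfolding tau_def using simples_nonempty[of "l - 1" n] by blast
  then obtain c y' where cy: "tau n l = c # y'" by (cases "tau n l") auto
  have "c \<in> set (tau n l)" using cy by simp
  then have cn: "c \<in> {1..<n}" using y unfolding words_def by blast
  have "pre [c] (tau n l)" unfolding cy pre_def by (rule exI[of _ y']) simp
  then have cD: "c \<in> D_L n (tau n l)" unfolding D_L_iff[OF y] using cn by blast
  have e: "[] \<in> words n" by (simp add: words_def)
  have "i \<notin> D_R n []" for i
  proof
    assume "i \<in> D_R n []"
    then obtain z where "(z@[i]) ~~ []" using D_R_iff[OF e] by blast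
    then show False using beq_length by fastforce
  qed
  then have "\<not> D_L n (tau n l) \<subseteq> D_R n (tau n 1)" using t1 cD by auto
  then show "M n 1 l = 0" using M_crit[OF f1 l1] by simp
next
  fix k :: nat assume k: "k \<in> {1..<fact n}"
  then have k1: "k \<in> {1..fact n}" by simp
  have tf: "tau n (fact n) = Delta n" unfolding tau_def using simples_last by simp
  have x: "tau n k \<in> words n" "red (tau n k)" using tau_good[OF k1] by auto
  have kk: "k - 1 < fact n" "k - 1 \<noteq> fact n - 1" using k by auto
  have "length (tau n k) < length (Delta n)"
    using simples_length[OF kk(1)] kk(2) unfolding tau_def by simp
  moreover obtain z where z: "(tau n k @ z) ~~ Delta n"
    using red_simple x unfolding words_def pre_def by blast
  ultimately have "z \<noteq> []" using beq_length[OF z] by auto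
  then obtain c z' where cz: "z = c # z'" by (cases z) auto
  have cn: "c \<in> {1..<n}" using beq_set[OF z] cz Delta_set[of n] by auto
  have "pre [c] (Delta n)" using red_simple[of "[c]" n] cn red_single by auto
  then have cDL: "c \<in> D_L n (Delta n)" using D_L_iff[OF Delta_words] cn by simp
  have "red (tau n k @ c # z')" using beq_red[OF z] red_Delta cz by simp
  then have rc: "red (tau n k @ [c])" using red_append1[of "tau n k @ [c]" z'] by simp
  have "c \<notin> D_R n (tau n k)"
  proof
    assume "c \<in> D_R n (tau n k)"
    then obtain z0 where "(z0@[c]) ~~ tau n k" using D_R_iff[OF x(1)] by blast
    then have "((z0@[c])@[c]) ~~ (tau n k @ [c])" by (rule beq_app_right)
    then have "red (z0@[c,c]@[])" using rc beq_red by force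
    then show False using not_red_cc by blast
  qed
  have ff: "(fact n::nat) \<in> {1..fact n}" by (simp add: fact_ge_1)
  have "\<not> D_L n (tau n (fact n)) \<subseteq> D_R n (tau n k)" using tf cDL \<open>c \<notin> D_R n (tau n k)\<close> by auto
  then show "M n k (fact n) = 0" using M_crit[OF k1 ff] by simp
next
  fix k l :: nat assume k: "k \<in> {1..fact n}" and l: "l \<in> {1..fact (n - 1)}"
  obtain m where n: "n = Suc m" and m1: "m \<ge> 1" using assms by (cases n) auto
  have fm: "fact m > (0::nat)" by simp
  have fmn: "fact m \<le> (fact n :: nat)" using n by (simp add: fact_mono)
  define k0 where "k0 = k - 1"
  have k0: "k0 < fact (Suc m)" using k n unfolding k0_def by auto
  define r where "r = k0 mod fact m"
  define i where "i = Suc m - k0 div fact m"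
  have "k0 div fact m < Suc m" using k0 fm by (simp add: div_less_iff_less_mult)
  then have i: "1 \<le> i" "i \<le> Suc m" unfolding i_def by auto
  have r: "r < fact m" unfolding r_def using fm by simp
  have tk: "tau n k = [i..<Suc m] @ simples m ! r"
    unfolding tau_def n using simples_nth[OF k0] unfolding k0_def r_def i_def by simp
  have tk': "tau (n - 1) ((k - 1) mod fact (n - 1) + 1) = simples m ! r"
    unfolding tau_def n r_def k0_def by simp
  have l': "l - 1 < fact m" using l n by auto
  have tl: "tau n l = simples m ! (l - 1)" "tau (n - 1) l = simples m ! (l - 1)"
    unfolding tau_def n using simples_nth_low[OF l'] by simp_all
  define x where "x = simples m ! r"
  define y where "y = simples m ! (l - 1)"
  have x: "x \<in> words m" "red x" using simples_nth_good[OF r] unfolding x_def words_def by auto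
  have y: "y \<in> words m" "red y" using simples_nth_good[OF l'] unfolding y_def words_def by auto
  have y': "y \<in> words (Suc m)" using y(1) unfolding words_def by auto
  have w: "[i..<Suc m] @ x \<in> words (Suc m)" "red ([i..<Suc m] @ x)"
    using tau_good[OF k] tk n x_def by auto
  have "normal (Suc m) ([i..<Suc m] @ x) y \<longleftrightarrow> normal m x y"
  proof -
    have "normal (Suc m) ([i..<Suc m] @ x) y \<longleftrightarrow> D_L (Suc m) y \<subseteq> D_R (Suc m) ([i..<Suc m] @ x)"
      using criterion[OF w y' y(2)] .
    also have "... \<longleftrightarrow> D_L m y \<subseteq> D_R m x"
    proof -
      have sub: "D_L m y \<subseteq> {1..<m}" unfolding D_L_def by auto
      show ?thesis unfolding DL_eq[OF y(1)] using sub DR_block[OF x i] by blast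
    qed
    also have "... \<longleftrightarrow> normal m x y" using criterion[OF x y] by simp
    finally show ?thesis .
  qed
  then show "M n k l = M (n - 1) ((k - 1) mod fact (n - 1) + 1) l"
  proof -
    have e1: "tau n k = [i..<Suc m] @ x" using tk x_def by simp
    have e2: "tau (n - 1) ((k - 1) mod fact (n - 1) + 1) = x" using tk' x_def by simp
    have e3: "tau n l = y" "tau (n - 1) l = y" using tl y_def by simp_all
    show ?thesis unfolding M_def e1 e2 e3 using \<open>normal (Suc m) ([i..<Suc m] @ x) y \<longleftrightarrow> normal m x y\<close> n by simp
  qed
next
  fix k k' l :: nat assume k: "k \<in> {1..fact n}" and k': "k' \<in> {1..fact n}"
    and D: "D_R n (tau n k) = D_R n (tau n k')" and l: "l \<in> {1..fact n}"
  show "M n k l = M n k' l" using M_crit[OF k l] M_crit[OF k' l] D by simp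
next
  fix l l' k :: nat assume l: "l \<in> {1..fact n}" and l': "l' \<in> {1..fact n}"
    and D: "D_L n (tau n l) = D_L n (tau n l')" and k: "k \<in> {1..fact n}"
  show "M n k l = M n k l'" using M_crit[OF k l] M_crit[OF k l'] D by simp
qed


end
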